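(* Define $h(n)$ by $$\sum_{n=0}^{\infty}h(n)q^n=\sum_{n=0}^{\infty}\frac{(-q;q)_{2n}q^n}{(q;q)_{2n+1}}=\frac{(-q;q)_\infty}{(q;q)_\infty}(q^4,-q^4,-q^4;q^4)_\infty .$$ Then $h(n)$ equals the number of partitions of $n$ into parts such that no part is $\equiv0\pmod 8$, parts $\equiv2,6\pmod 8$ have one colour, and parts $\equiv1,3,4,5,7\pmod 8$ have two colours.
   Context: $(A;q)_0=1$, $(A;q)_n=\prod_{j=0}^{n-1}(1-Aq^j)$, $(A;q)_\infty=\prod_{j\ge0}(1-Aq^j)$, and $(A_1,\dots,A_r;q)_\infty=\prod_i(A_i;q)_\infty$. A part "having $t$ colours" means that part may occur in $t$ distinguishable copies; the generating function for partitions where parts $\equiv r\pmod s$ have $t$ colours is $1/(q^r;q^s)_\infty^t$. *)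

theory Defs
  imports "HOL-Computational_Algebra.Formal_Power_Series" "HOL-Library.Multiset"
begin

definition qpoch :: "real fps \<Rightarrow> real fps \<Rightarrow> nat \<Rightarrow> real fps" where
  "qpoch A q n = (\<Prod>j<n. 1 - A * q ^ j)"

definition qpoch_inf :: "real fps \<Rightarrow> real fps \<Rightarrow> real fps" where
  "qpoch_inf A q = lim (\<lambda>n. qpoch A q n)"

definition h_term :: "nat \<Rightarrow> real fps" where
  "h_term k = fps_X ^ k * qpoch (- fps_X) fps_X (2 * k) * inverse (qpoch fps_X fps_X (2 * k + 1))"

definition h_gf :: "real fps" where
  "h_gf = lim (\<lambda>N. \<Sum>k<N. h_term k)"

definition h :: "nat \<Rightarrow> real" where
  "h n = fps_nth h_gf n"

definition colours :: "nat \<Rightarrow> nat" where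
  "colours p = (if p mod 8 = 0 then 0 else if p mod 8 \<in> {2, 6} then 1 else 2)"

definition coloured_partitions :: "nat \<Rightarrow> (nat \<times> nat) multiset set" where
  "coloured_partitions n =
     {M. (\<forall>x \<in># M. fst x > 0 \<and> snd x < colours (fst x)) \<and> (\<Sum>x \<in># M. fst x) = n}"

end

theory Submission
  imports Defs
begin

unbundle fps_syntax


definition hz :: "nat \<Rightarrow> real fps \<Rightarrow> bool" where
  "hz k g \<longleftrightarrow> (\<forall>j<k. g $ j = 0)"

definition cg :: "nat \<Rightarrow> real fps \<Rightarrow> real fps \<Rightarrow> bool" where
  "cg k f g \<longleftrightarrow> hz k (f - g)"

lemma hz_mono: "hz k g \<Longrightarrow> l \<le> k \<Longrightarrow> hz l g"
  by (auto simp: hz_def)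

lemma hz_0 [simp]: "hz k 0" and hz_zero [simp]: "hz 0 g"
  by (auto simp: hz_def)

lemma hz_add: "hz k f \<Longrightarrow> hz k g \<Longrightarrow> hz k (f + g)"
  by (auto simp: hz_def)

lemma hz_diff: "hz k f \<Longrightarrow> hz k g \<Longrightarrow> hz k (f - g)"
  by (auto simp: hz_def)

lemma hz_uminus: "hz k f \<Longrightarrow> hz k (- f)"
  by (auto simp: hz_def)

lemma hz_sum: "(\<And>i. i \<in> S \<Longrightarrow> hz k (f i)) \<Longrightarrow> hz k (\<Sum>i\<in>S. f i)"
  by (auto simp: hz_def fps_sum_nth intro!: sum.neutral)

lemma hz_mult: assumes "hz k f" "hz l g" shows "hz (k + l) (f * g)"
  unfolding hz_def
proof (intro allI impI)
  fix j assume j: "j < k + l"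
  have "(f * g) $ j = (\<Sum>i=0..j. f$i * g$(j - i))" by (rule fps_mult_nth)
  also have "\<dots> = 0"
  proof (rule sum.neutral, intro ballI)
    fix i assume ij: "i \<in> {0..j}"
    show "f$i * g$(j-i) = 0"
    proof (cases "i < k")
      case True then show ?thesis using assms(1) by (simp add: hz_def)
    next
      case False then have "j - i < l" using j ij by auto
      then show ?thesis using assms(2) by (simp add: hz_def)
    qed
  qed
  finally show "(f * g) $ j = 0" .
qed

lemma hz_mult_left: "hz k g \<Longrightarrow> hz k (f * g)"
  using hz_mult[of 0 f k g] by simp

lemma hz_mult_right: "hz k f \<Longrightarrow> hz k (f * g)"
  using hz_mult[of k f 0 g] by simp

lemma hz_X_power: "hz k (fps_X ^ k)"
  by (simp add: hz_def)

lemma hz_X_power_mult: "hz k (fps_X ^ k * f)"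
  by (simp add: hz_def fps_X_power_mult_nth)

lemma hz_power: "hz k f \<Longrightarrow> hz (k * m) (f ^ m)"
proof (induction m)
  case 0 then show ?case by simp
next
  case (Suc m) then show ?case using hz_mult[of k f "k*m" "f^m"] by (simp add: add.commute)
qed

lemma hz_all_eq: assumes a: "\<And>k. hz k (f - g)" shows "f = g"
proof (rule fps_ext)
  fix n
  have "(f - g) $ n = 0" using a[of "Suc n"] by (simp add: hz_def)
  then show "f $ n = g $ n" by simp
qed

lemma hz_1_iff: "hz 1 f \<longleftrightarrow> f $ 0 = 0"
  by (simp add: hz_def)

lemma cg_refl [simp]: "cg k f f" by (simp add: cg_def)
lemma cg_sym: "cg k f g \<Longrightarrow> cg k g f"
  unfolding cg_def using hz_uminus by fastforce
lemma cg_trans: "cg k f g \<Longrightarrow> cg k g r \<Longrightarrow> cg k f r"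
  unfolding cg_def using hz_add by fastforce
lemma cg_mono: "cg k f g \<Longrightarrow> l \<le> k \<Longrightarrow> cg l f g"
  unfolding cg_def using hz_mono by blast
lemma cg_add: "cg k a b \<Longrightarrow> cg k c d \<Longrightarrow> cg k (a + c) (b + d)"
  unfolding cg_def using hz_add by (fastforce simp: algebra_simps)
lemma cg_diff: "cg k a b \<Longrightarrow> cg k c d \<Longrightarrow> cg k (a - c) (b - d)"
  unfolding cg_def using hz_diff by (fastforce simp: algebra_simps)
lemma cg_mult: assumes "cg k a b" "cg k c d" shows "cg k (a * c) (b * d)"
proof -
  have "a * c - b * d = (a - b) * c + b * (c - d)" by (simp add: algebra_simps)
  then show ?thesis using assms unfolding cg_def
    by (metis hz_add hz_mult_left hz_mult_right)
qed
lemma cg_mult_left: "cg k c d \<Longrightarrow> cg k (a * c) (a * d)"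
  using cg_mult[OF cg_refl] by blast
lemma cg_power: "cg k a b \<Longrightarrow> cg k (a ^ m) (b ^ m)"
  by (induction m) (auto intro: cg_mult)
lemma cg_prod: "(\<And>i. i \<in> S \<Longrightarrow> cg k (f i) (g i)) \<Longrightarrow> cg k (\<Prod>i\<in>S. f i) (\<Prod>i\<in>S. g i)"
  by (induction S rule: infinite_finite_induct) (auto intro: cg_mult)
lemma cg_sum: "(\<And>i. i \<in> S \<Longrightarrow> cg k (f i) (g i)) \<Longrightarrow> cg k (\<Sum>i\<in>S. f i) (\<Sum>i\<in>S. g i)"
  by (induction S rule: infinite_finite_induct) (auto intro: cg_add)
lemma cg_eq: "(\<And>k. cg k f g) \<Longrightarrow> f = g"
  using hz_all_eq cg_def by blast
lemma cg_0_iff: "cg k f 0 \<longleftrightarrow> hz k f" by (simp add: cg_def)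

lemma cg_inverse:
  assumes "cg k a b" "a $ 0 \<noteq> 0" "b $ 0 \<noteq> 0"
  shows "cg k (inverse a) (inverse b)"
proof -
  have "inverse a - inverse b = inverse a * inverse b * (b - a)"
    using assms(2,3) by (simp add: algebra_simps inverse_mult_eq_1')
  moreover have "hz k (b - a)" using assms(1) cg_sym cg_def by blast
  ultimately show ?thesis unfolding cg_def by (metis hz_mult_left)
qed


lemmas [trans] = cg_trans


lemma cauchy_lim:
  fixes s :: "nat \<Rightarrow> real fps"
  assumes c: "\<And>K n. K \<le> n \<Longrightarrow> cg K (s n) (s K)"
  shows "s \<longlonglongrightarrow> lim s" "\<And>K n. K \<le> n \<Longrightarrow> cg K (lim s) (s n)"
proof -
  define L where "L = Abs_fps (\<lambda>k. s (Suc k) $ k)"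
  have co: "s n $ k = L $ k" if "Suc k \<le> n" for n k
  proof -
    have "cg (Suc k) (s n) (s (Suc k))" using c that by blast
    then have "(s n - s (Suc k)) $ k = 0" unfolding cg_def hz_def by blast
    then show ?thesis by (simp add: L_def)
  qed
  have t: "s \<longlonglongrightarrow> L"
  proof (rule tendsto_fpsI)
    fix k show "\<forall>\<^sub>F x in sequentially. s x $ k = L $ k"
      using co by (auto simp: eventually_sequentially)
  qed
  then have l: "lim s = L" by (rule limI)
  show "s \<longlonglongrightarrow> lim s" using t l by simp
  show "cg K (lim s) (s n)" if "K \<le> n" for K n
    unfolding cg_def hz_def l using co that by auto
qed

definition ssum :: "(nat \<Rightarrow> real fps) \<Rightarrow> real fps" where
  "ssum f = lim (\<lambda>N. \<Sum>n<N. f n)"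

lemma sum_split_lessThan:
  fixes f :: "nat \<Rightarrow> real fps"
  assumes "K \<le> n" shows "(\<Sum>i<n. f i) = (\<Sum>i<K. f i) + (\<Sum>i\<in>{K..<n}. f i)"
proof -
  have "{..<n} = {..<K} \<union> {K..<n}" using assms by auto
  moreover have "{..<K} \<inter> {K..<n} = {}" by auto
  ultimately show ?thesis using sum.union_disjoint[of "{..<K}" "{K..<n}" f] by simp
qed

lemma partial_sums_cauchy:
  assumes "\<And>n. hz n (f n)" "K \<le> n"
  shows "cg K (\<Sum>i<n. f i) (\<Sum>i<K. f i)"
proof -
  have "hz K (\<Sum>i\<in>{K..<n}. f i)"
    by (rule hz_sum) (use assms(1) hz_mono in auto)
  then show ?thesis unfolding cg_def using sum_split_lessThan[OF assms(2), of f] by simp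
qed

lemma ssum_lim:
  assumes "\<And>n. hz n (f n)"
  shows "(\<lambda>N. \<Sum>n<N. f n) \<longlonglongrightarrow> ssum f"
  unfolding ssum_def by (rule cauchy_lim(1)) (use partial_sums_cauchy[OF assms] in auto)

lemma ssum_cg:
  assumes "\<And>n. hz n (f n)" "K \<le> N"
  shows "cg K (ssum f) (\<Sum>n<N. f n)"
  unfolding ssum_def by (rule cauchy_lim(2)) (use partial_sums_cauchy[OF assms(1)] assms(2) in auto)

lemma hz_ssum:
  assumes "\<And>n. hz n (f n)" "\<And>n. hz k (f n)"
  shows "hz k (ssum f)"
proof -
  have "cg k (ssum f) (\<Sum>n<k. f n)" by (rule ssum_cg[OF assms(1)]) auto
  moreover have "hz k (\<Sum>n<k. f n)" by (rule hz_sum) (use assms(2) in auto)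
  ultimately show ?thesis unfolding cg_def using hz_add by fastforce
qed

lemma ssum_cong: "(\<And>n. f n = g n) \<Longrightarrow> ssum f = ssum g"
  by (simp add: ssum_def)

lemma ssum_mult_left:
  assumes "\<And>n. hz n (f n)"
  shows "ssum (\<lambda>n. c * f n) = c * ssum f"
proof (rule cg_eq)
  fix K
  have a: "\<And>n. hz n (c * f n)" using assms hz_mult_left by blast
  have "cg K (ssum (\<lambda>n. c * f n)) (\<Sum>n<K. c * f n)" by (rule ssum_cg[OF a]) auto
  also have "(\<Sum>n<K. c * f n) = c * (\<Sum>n<K. f n)" by (simp add: sum_distrib_left)
  also have "cg K (c * (\<Sum>n<K. f n)) (c * ssum f)"
    by (rule cg_mult_left, rule cg_sym, rule ssum_cg[OF assms]) auto
  finally show "cg K (ssum (\<lambda>n. c * f n)) (c * ssum f)" .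
qed

lemma ssum_diff:
  assumes "\<And>n. hz n (f n)" "\<And>n. hz n (g n)"
  shows "ssum (\<lambda>n. f n - g n) = ssum f - ssum g"
proof (rule cg_eq)
  fix K
  have a: "\<And>n. hz n (f n - g n)" using assms hz_diff by blast
  have "cg K (ssum (\<lambda>n. f n - g n)) (\<Sum>n<K. f n - g n)" by (rule ssum_cg[OF a]) auto
  also have "(\<Sum>n<K. f n - g n) = (\<Sum>n<K. f n) - (\<Sum>n<K. g n)" by (simp add: sum_subtractf)
  also have "cg K ((\<Sum>n<K. f n) - (\<Sum>n<K. g n)) (ssum f - ssum g)"
    by (rule cg_diff; rule cg_sym, rule ssum_cg) (use assms in auto)
  finally show "cg K (ssum (\<lambda>n. f n - g n)) (ssum f - ssum g)" .
qed

lemma ssum_shift: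
  assumes "\<And>n. hz n (f n)"
  shows "ssum f = f 0 + ssum (\<lambda>n. f (Suc n))"
proof (rule cg_eq)
  fix K
  have a: "\<And>n. hz n (f (Suc n))" using assms hz_mono le_SucI by blast
  have "cg K (ssum f) (\<Sum>n<Suc K. f n)" by (rule ssum_cg[OF assms]) auto
  also have "(\<Sum>n<Suc K. f n) = f 0 + (\<Sum>n<K. f (Suc n))" by (rule sum.lessThan_Suc_shift)
  also have "cg K (f 0 + (\<Sum>n<K. f (Suc n))) (f 0 + ssum (\<lambda>n. f (Suc n)))"
    by (rule cg_add[OF cg_refl], rule cg_sym, rule ssum_cg[OF a]) auto
  finally show "cg K (ssum f) (f 0 + ssum (\<lambda>n. f (Suc n)))" .
qed

lemma ssum_swap:
  assumes "\<And>n m. hz (n + m) (w n m)"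
  shows "ssum (\<lambda>n. ssum (\<lambda>m. w n m)) = ssum (\<lambda>m. ssum (\<lambda>n. w n m))"
proof (rule cg_eq)
  fix K
  have w1: "\<And>n m. hz m (w n m)" using assms hz_mono le_add2 by blast
  have w2: "\<And>n m. hz n (w n m)" using assms hz_mono le_add1 by blast
  have i1: "\<And>n. hz n (ssum (\<lambda>m. w n m))" by (rule hz_ssum[OF w1 w2])
  have i2: "\<And>m. hz m (ssum (\<lambda>n. w n m))" by (rule hz_ssum[OF w2 w1])
  have "cg K (ssum (\<lambda>n. ssum (\<lambda>m. w n m))) (\<Sum>n<K. ssum (\<lambda>m. w n m))"
    by (rule ssum_cg[OF i1]) auto
  also have "cg K (\<Sum>n<K. ssum (\<lambda>m. w n m)) (\<Sum>n<K. \<Sum>m<K. w n m)"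
    by (rule cg_sum, rule ssum_cg[OF w1]) auto
  also have "(\<Sum>n<K. \<Sum>m<K. w n m) = (\<Sum>m<K. \<Sum>n<K. w n m)" by (rule sum.swap)
  also have "cg K (\<Sum>m<K. \<Sum>n<K. w n m) (\<Sum>m<K. ssum (\<lambda>n. w n m))"
    by (rule cg_sum, rule cg_sym, rule ssum_cg[OF w2]) auto
  also have "cg K (\<Sum>m<K. ssum (\<lambda>n. w n m)) (ssum (\<lambda>m. ssum (\<lambda>n. w n m)))"
    by (rule cg_sym, rule ssum_cg[OF i2]) auto
  finally show "cg K (ssum (\<lambda>n. ssum (\<lambda>m. w n m))) (ssum (\<lambda>m. ssum (\<lambda>n. w n m)))" .
qed


lemma qpoch_0 [simp]: "qpoch A Q 0 = 1" by (simp add: qpoch_def)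

lemma qpoch_Suc: "qpoch A Q (Suc n) = qpoch A Q n * (1 - A * Q ^ n)"
  by (simp add: qpoch_def)

lemma qpoch_Suc_shift: "qpoch A Q (Suc n) = (1 - A) * qpoch (A * Q) Q n"
  unfolding qpoch_def by (subst prod.lessThan_Suc_shift) (simp add: mult.assoc power_Suc)

lemma qpoch_add: "qpoch A Q (n + m) = qpoch A Q n * qpoch (A * Q ^ n) Q m"
proof (induction m)
  case 0 then show ?case by simp
next
  case (Suc m)
  then show ?case by (simp add: qpoch_Suc power_add mult.assoc)
qed

lemma qpoch_cg1:
  assumes "hz k A" shows "cg k (qpoch A Q n) 1"
proof -
  have "cg k (\<Prod>j<n. 1 - A * Q ^ j) (\<Prod>j<n. 1)"
    by (rule cg_prod) (simp add: cg_def hz_uminus hz_mult_right assms)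
  then show ?thesis by (simp add: qpoch_def)
qed

lemma hz_power_ge: "hz 1 Q \<Longrightarrow> hz n (Q ^ n)"
  using hz_power[of 1 Q n] by simp

lemma qpoch_stable:
  assumes Q: "hz 1 Q" and "K \<le> n"
  shows "cg K (qpoch A Q n) (qpoch A Q K)"
proof -
  obtain m where n: "n = K + m" using assms(2) le_Suc_ex by blast
  have "cg K (qpoch (A * Q ^ K) Q m) 1"
    by (rule qpoch_cg1, rule hz_mult_left, rule hz_power_ge[OF Q])
  then have "cg K (qpoch A Q K * qpoch (A * Q ^ K) Q m) (qpoch A Q K * 1)"
    by (rule cg_mult_left)
  then show ?thesis by (simp add: n qpoch_add)
qed

lemma qinf_cg:
  assumes Q: "hz 1 Q" and "K \<le> n"
  shows "cg K (qpoch_inf A Q) (qpoch A Q n)"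
  unfolding qpoch_inf_def
  by (rule cauchy_lim(2)) (use qpoch_stable[OF Q] assms(2) in auto)

lemma qinf_lim:
  assumes Q: "hz 1 Q"
  shows "(\<lambda>n. qpoch A Q n) \<longlonglongrightarrow> qpoch_inf A Q"
  unfolding qpoch_inf_def
  by (rule cauchy_lim(1)) (use qpoch_stable[OF Q] in auto)

lemma qpoch_nth0: "A $ 0 = 0 \<Longrightarrow> qpoch A Q n $ 0 = 1"
  using qpoch_cg1[of 1 A Q n] by (simp add: cg_def hz_def)

lemma qinf_nth0: assumes "hz 1 Q" "A $ 0 = 0" shows "qpoch_inf A Q $ 0 = 1"
proof -
  have "cg 1 (qpoch_inf A Q) (qpoch A Q 1)" by (rule qinf_cg) (use assms in auto)
  then show ?thesis using qpoch_nth0[OF assms(2), of Q 1] by (simp add: cg_def hz_def)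
qed

lemma qinf_cg1:
  assumes Q: "hz 1 Q" and "hz k A" shows "cg k (qpoch_inf A Q) 1"
proof -
  have "cg k (qpoch_inf A Q) (qpoch A Q k)" by (rule qinf_cg[OF Q]) auto
  also have "cg k (qpoch A Q k) 1" by (rule qpoch_cg1[OF assms(2)])
  finally show ?thesis .
qed

lemma qinf_shift:
  assumes Q: "hz 1 Q"
  shows "qpoch_inf A Q = (1 - A) * qpoch_inf (A * Q) Q"
proof (rule cg_eq)
  fix K
  have "cg K (qpoch_inf A Q) (qpoch A Q (Suc K))" by (rule qinf_cg[OF Q]) auto
  also have "qpoch A Q (Suc K) = (1 - A) * qpoch (A * Q) Q K" by (rule qpoch_Suc_shift)
  also have "cg K ((1 - A) * qpoch (A * Q) Q K) ((1 - A) * qpoch_inf (A * Q) Q)"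
    by (rule cg_mult_left, rule cg_sym, rule qinf_cg[OF Q]) auto
  finally show "cg K (qpoch_inf A Q) ((1 - A) * qpoch_inf (A * Q) Q)" .
qed

lemma qinf_tail:
  assumes Q: "hz 1 Q"
  shows "qpoch_inf A Q = qpoch A Q n * qpoch_inf (A * Q ^ n) Q"
proof (rule cg_eq)
  fix K
  have "cg K (qpoch_inf A Q) (qpoch A Q (n + K))" by (rule qinf_cg[OF Q]) auto
  also have "qpoch A Q (n + K) = qpoch A Q n * qpoch (A * Q ^ n) Q K" by (rule qpoch_add)
  also have "cg K (qpoch A Q n * qpoch (A * Q ^ n) Q K) (qpoch A Q n * qpoch_inf (A * Q ^ n) Q)"
    by (rule cg_mult_left, rule cg_sym, rule qinf_cg[OF Q]) auto
  finally show "cg K (qpoch_inf A Q) (qpoch A Q n * qpoch_inf (A * Q ^ n) Q)" .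
qed

lemma qpoch_split:
  "qpoch A Q (2 * n) = qpoch A (Q ^ 2) n * qpoch (A * Q) (Q ^ 2) n"
proof (induction n)
  case 0 then show ?case by simp
next
  case (Suc n)
  have e: "2 * Suc n = Suc (Suc (2 * n))" by simp
  show ?case unfolding e qpoch_Suc Suc.IH
    by (simp add: power_mult[symmetric] mult_ac power_Suc)
qed

lemma qpoch_sq:
  "qpoch A Q n * qpoch (- A) Q n = qpoch (A ^ 2) (Q ^ 2) n"
  unfolding qpoch_def prod.distrib[symmetric]
proof (rule prod.cong)
  fix j
  show "(1 - A * Q ^ j) * (1 - - A * Q ^ j) = 1 - A\<^sup>2 * (Q\<^sup>2) ^ j"
    by (simp add: algebra_simps power2_eq_square power_mult_distrib flip: power_mult)
qed simp

lemma hz1_sq: "hz 1 Q \<Longrightarrow> hz 1 (Q ^ 2)"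
  using hz_power[of 1 Q 2] hz_mono[of 2 "Q^2" 1] by simp

lemma qinf_split:
  assumes Q: "hz 1 Q"
  shows "qpoch_inf A Q = qpoch_inf A (Q ^ 2) * qpoch_inf (A * Q) (Q ^ 2)"
proof (rule cg_eq)
  fix K
  have Q2: "hz 1 (Q ^ 2)" by (rule hz1_sq[OF Q])
  have "cg K (qpoch_inf A Q) (qpoch A Q (2 * K))" by (rule qinf_cg[OF Q]) auto
  also have "qpoch A Q (2 * K) = qpoch A (Q ^ 2) K * qpoch (A * Q) (Q ^ 2) K" by (rule qpoch_split)
  also have "cg K (qpoch A (Q ^ 2) K * qpoch (A * Q) (Q ^ 2) K)
                  (qpoch_inf A (Q ^ 2) * qpoch_inf (A * Q) (Q ^ 2))"
    by (rule cg_mult; rule cg_sym, rule qinf_cg[OF Q2]) auto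
  finally show "cg K (qpoch_inf A Q) (qpoch_inf A (Q ^ 2) * qpoch_inf (A * Q) (Q ^ 2))" .
qed

lemma qinf_sq:
  assumes Q: "hz 1 Q"
  shows "qpoch_inf A Q * qpoch_inf (- A) Q = qpoch_inf (A ^ 2) (Q ^ 2)"
proof (rule cg_eq)
  fix K
  have Q2: "hz 1 (Q ^ 2)" by (rule hz1_sq[OF Q])
  have "cg K (qpoch_inf A Q * qpoch_inf (- A) Q) (qpoch A Q K * qpoch (- A) Q K)"
    by (rule cg_mult; rule qinf_cg[OF Q]) auto
  also have "qpoch A Q K * qpoch (- A) Q K = qpoch (A ^ 2) (Q ^ 2) K" by (rule qpoch_sq)
  also have "cg K (qpoch (A ^ 2) (Q ^ 2) K) (qpoch_inf (A ^ 2) (Q ^ 2))"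
    by (rule cg_sym, rule qinf_cg[OF Q2]) auto
  finally show "cg K (qpoch_inf A Q * qpoch_inf (- A) Q) (qpoch_inf (A ^ 2) (Q ^ 2))" .
qed

lemma qinf_euler:
  assumes Q: "hz 1 Q"
  shows "qpoch_inf Q (Q ^ 2) * qpoch_inf (- Q) Q = 1"
proof -
  have Q2: "hz 1 (Q ^ 2)" by (rule hz1_sq[OF Q])
  have a: "qpoch_inf Q Q = qpoch_inf Q (Q ^ 2) * qpoch_inf (Q ^ 2) (Q ^ 2)"
    using qinf_split[OF Q, of Q] by (simp add: power2_eq_square)
  have b: "qpoch_inf Q Q * qpoch_inf (- Q) Q = qpoch_inf (Q ^ 2) (Q ^ 2)"
    by (rule qinf_sq[OF Q])
  have u: "qpoch_inf (Q ^ 2) (Q ^ 2) $ 0 = 1"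
    by (rule qinf_nth0[OF Q2]) (use Q2 in \<open>simp add: hz_def\<close>)
  have eq: "qpoch_inf (Q ^ 2) (Q ^ 2) * (qpoch_inf Q (Q ^ 2) * qpoch_inf (- Q) Q)
        = qpoch_inf (Q ^ 2) (Q ^ 2) * 1"
    using a b by (simp add: mult_ac)
  have nz: "qpoch_inf (Q ^ 2) (Q ^ 2) \<noteq> 0" using u by auto
  show ?thesis using eq unfolding mult_left_cancel[OF nz] .
qed


definition qbt :: "real fps \<Rightarrow> real fps \<Rightarrow> real fps \<Rightarrow> nat \<Rightarrow> real fps" where
  "qbt a Q z m = qpoch a Q m * z ^ m * inverse (qpoch Q Q m)"

definition qG :: "real fps \<Rightarrow> real fps \<Rightarrow> real fps \<Rightarrow> real fps" where
  "qG a Q z = ssum (qbt a Q z)"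

lemma hz_qbt: "hz 1 z \<Longrightarrow> hz m (qbt a Q z m)"
  unfolding qbt_def using hz_power_ge[of z m] hz_mult_left hz_mult_right by blast

lemma qbt_0 [simp]: "qbt a Q z 0 = 1" by (simp add: qbt_def)

lemma qbt_step:
  assumes Q: "hz 1 Q"
  shows "qbt a Q z (Suc k) - qbt a Q (z * Q) (Suc k) = z * (qbt a Q z k - a * qbt a Q (z * Q) k)"
proof -
  define u where "u = inverse (1 - Q * Q ^ k)"
  have Q0: "Q $ 0 = 0" using Q unfolding hz_1_iff .
  have Qk: "(Q * Q ^ k) $ 0 = 0" using Q0 by simp
  have u1: "(1 - Q * Q ^ k) * u = 1" unfolding u_def
    by (rule inverse_mult_eq_1') (simp add: Q0)
  have "qbt a Q z (Suc k) - qbt a Q (z * Q) (Suc k)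
      = qpoch a Q k * (1 - a * Q ^ k) * z * z ^ k * inverse (qpoch Q Q k) * ((1 - Q * Q ^ k) * u)"
    unfolding qbt_def qpoch_Suc fps_inverse_mult u_def
    by (simp add: algebra_simps power_mult_distrib)
  also have "\<dots> = z * (qbt a Q z k - a * qbt a Q (z * Q) k)"
    unfolding u1 qbt_def by (simp add: algebra_simps power_mult_distrib)
  finally show ?thesis .
qed

lemma qbt_partial:
  assumes Q: "hz 1 Q"
  shows "(\<Sum>m<Suc N. qbt a Q z m) - (\<Sum>m<Suc N. qbt a Q (z * Q) m)
       = z * ((\<Sum>m<N. qbt a Q z m) - a * (\<Sum>m<N. qbt a Q (z * Q) m))"
proof -
  have "(\<Sum>m<Suc N. qbt a Q z m) - (\<Sum>m<Suc N. qbt a Q (z * Q) m)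
      = (\<Sum>m<Suc N. qbt a Q z m - qbt a Q (z * Q) m)" by (simp add: sum_subtractf)
  also have "\<dots> = (\<Sum>m<N. qbt a Q z (Suc m) - qbt a Q (z * Q) (Suc m))"
    by (subst sum.lessThan_Suc_shift) simp
  also have "\<dots> = (\<Sum>m<N. z * (qbt a Q z m - a * qbt a Q (z * Q) m))"
    by (simp add: qbt_step[OF Q])
  also have "\<dots> = z * (\<Sum>m<N. qbt a Q z m - a * qbt a Q (z * Q) m)"
    by (simp only: sum_distrib_left)
  also have "\<dots> = z * ((\<Sum>m<N. qbt a Q z m) - a * (\<Sum>m<N. qbt a Q (z * Q) m))"
    by (simp only: sum_subtractf sum_distrib_left)
  finally show ?thesis .
qed

lemma hz1_mult: "hz 1 z \<Longrightarrow> hz 1 (z * Q)"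
  by (rule hz_mult_right)

lemma qG_funeq:
  assumes Q: "hz 1 Q" and z: "hz 1 z"
  shows "(1 - z) * qG a Q z = (1 - a * z) * qG a Q (z * Q)"
proof -
  have z2: "hz 1 (z * Q)" using z by (rule hz1_mult)
  have t1: "\<And>n. hz n (qbt a Q z n)" using hz_qbt[OF z] .
  have t2: "\<And>n. hz n (qbt a Q (z * Q) n)" using hz_qbt[OF z2] .
  have "qG a Q z - qG a Q (z * Q) = z * (qG a Q z - a * qG a Q (z * Q))"
  proof (rule cg_eq)
    fix K
    have "cg K (qG a Q z - qG a Q (z * Q))
        ((\<Sum>m<Suc K. qbt a Q z m) - (\<Sum>m<Suc K. qbt a Q (z * Q) m))"
      unfolding qG_def by (rule cg_diff; rule ssum_cg) (use t1 t2 in auto)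
    also have "(\<Sum>m<Suc K. qbt a Q z m) - (\<Sum>m<Suc K. qbt a Q (z * Q) m)
       = z * ((\<Sum>m<K. qbt a Q z m) - a * (\<Sum>m<K. qbt a Q (z * Q) m))"
      by (rule qbt_partial[OF Q])
    also have "cg K (z * ((\<Sum>m<K. qbt a Q z m) - a * (\<Sum>m<K. qbt a Q (z * Q) m)))
                    (z * (qG a Q z - a * qG a Q (z * Q)))"
      unfolding qG_def
      by (rule cg_mult_left, rule cg_diff, rule cg_sym, rule ssum_cg, rule t1, simp,
          rule cg_mult_left, rule cg_sym, rule ssum_cg, rule t2, simp)
    finally show "cg K (qG a Q z - qG a Q (z * Q)) (z * (qG a Q z - a * qG a Q (z * Q)))" .
  qed
  then show ?thesis by (simp add: algebra_simps)
qed

lemma qG_cg1: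
  assumes z: "hz 1 z" and zk: "hz k z"
  shows "cg k (qG a Q z) 1"
proof (cases "k = 0")
  case True then show ?thesis by (simp add: cg_def)
next
  case False
  have t1: "\<And>n. hz n (qbt a Q z n)" using hz_qbt[OF z] .
  have "cg k (qG a Q z) (\<Sum>m<k. qbt a Q z m)" unfolding qG_def by (rule ssum_cg[OF t1]) simp
  also have "cg k (\<Sum>m<k. qbt a Q z m) (\<Sum>m<k. (if m = 0 then 1 else 0))"
  proof (rule cg_sum)
    fix m assume "m \<in> {..<k}"
    show "cg k (qbt a Q z m) (if m = 0 then 1 else 0)"
    proof (cases m)
      case 0 then show ?thesis by simp
    next
      case (Suc m')
      have "hz (k * m) (z ^ m)" by (rule hz_power[OF zk])
      then have "hz k (z ^ m)" by (rule hz_mono) (simp add: Suc)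
      then have "hz k (qbt a Q z m)" unfolding qbt_def
        using hz_mult_left hz_mult_right by blast
      then show ?thesis using Suc by (simp add: cg_def)
    qed
  qed
  also have "(\<Sum>m<k. (if m = 0 then 1 else 0)) = (1 :: real fps)"
    using False by (simp add: sum.delta)
  finally show ?thesis .
qed

lemma qbinomial:
  assumes Q: "hz 1 Q" and z: "hz 1 z"
  shows "qG a Q z = qpoch_inf (a * z) Q * inverse (qpoch_inf z Q)"
proof -
  define Phi where "Phi w = qG a Q w * qpoch_inf w Q - qpoch_inf (a * w) Q" for w
  have rec: "Phi w = (1 - a * w) * Phi (w * Q)" if w: "hz 1 w" for w
  proof -
    have "Phi w = qG a Q w * ((1 - w) * qpoch_inf (w * Q) Q) - (1 - a * w) * qpoch_inf (a * w * Q) Q"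
      unfolding Phi_def using qinf_shift[OF Q, of w] qinf_shift[OF Q, of "a * w"] by simp
    also have "\<dots> = ((1 - w) * qG a Q w) * qpoch_inf (w * Q) Q - (1 - a * w) * qpoch_inf (a * w * Q) Q"
      by (simp add: mult_ac)
    also have "\<dots> = (1 - a * w) * Phi (w * Q)"
      unfolding qG_funeq[OF Q w] Phi_def by (simp add: algebra_simps)
    finally show ?thesis .
  qed
  have base: "hz k (Phi w)" if "hz 1 w" "hz k w" for w k
  proof -
    have "cg k (qG a Q w * qpoch_inf w Q) (1 * 1)"
      by (rule cg_mult, rule qG_cg1, fact, fact, rule qinf_cg1[OF Q], fact)
    moreover have "cg k (qpoch_inf (a * w) Q) 1"
      by (rule qinf_cg1[OF Q], rule hz_mult_left, fact)
    ultimately have "cg k (Phi w) (1 * 1 - 1)" unfolding Phi_def by (rule cg_diff)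
    then show ?thesis by (simp add: cg_def)
  qed
  have iter: "hz k (Phi w)" if "hz 1 w" "hz k (Phi (w * Q ^ m))" for w k m
    using that
  proof (induction m arbitrary: w)
    case 0 then show ?case by simp
  next
    case (Suc m)
    have "hz k (Phi (w * Q))"
      by (rule Suc.IH, rule hz1_mult, rule Suc.prems(1)) (use Suc.prems(2) in \<open>simp add: mult_ac\<close>)
    then show ?case using rec[OF Suc.prems(1)] hz_mult_left by metis
  qed
  have "Phi z = 0"
  proof (rule hz_all_eq)
    fix k
    have "hz (1 + k) (z * Q ^ k)" by (rule hz_mult[OF z hz_power_ge[OF Q]])
    then have "hz k (Phi (z * Q ^ k))" using base hz_mono by (metis hz1_mult z le_add2 mult.commute)
    then show "hz k (Phi z - 0)" using iter[OF z] by simp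
  qed
  then have e: "qG a Q z * qpoch_inf z Q = qpoch_inf (a * z) Q" unfolding Phi_def by simp
  have "qpoch_inf z Q $ 0 = 1" by (rule qinf_nth0[OF Q]) (use z in \<open>simp add: hz_def\<close>)
  then have "qpoch_inf z Q * inverse (qpoch_inf z Q) = 1" by (simp add: inverse_mult_eq_1')
  then show ?thesis using e[symmetric] by (metis mult.assoc mult.right_neutral)
qed


abbreviation qX :: "real fps" where "qX \<equiv> fps_X"

lemma hz_Suc0 [simp]: "hz (Suc 0) f \<longleftrightarrow> f $ 0 = 0" by (simp add: hz_def)

lemma hz1_X: "hz 1 qX" by (simp add: hz_def)
lemma hz1_Xp: "k \<ge> 1 \<Longrightarrow> hz 1 (qX ^ k)"
  using hz_X_power[of k] hz_mono by blast
lemma hz1_neg: "hz 1 A \<Longrightarrow> hz 1 (- A)" by (rule hz_uminus)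

lemma unit_qinf: "hz 1 Q \<Longrightarrow> hz 1 A \<Longrightarrow> qpoch_inf A Q * inverse (qpoch_inf A Q) = 1"
  by (rule inverse_mult_eq_1') (simp add: qinf_nth0 hz_1_iff)
lemma unit_qpoch: "hz 1 A \<Longrightarrow> qpoch A Q n * inverse (qpoch A Q n) = 1"
  by (rule inverse_mult_eq_1') (simp add: qpoch_nth0 hz_1_iff)

definition uu :: "nat \<Rightarrow> real fps" where
  "uu n = qX ^ n * qpoch (- qX) (qX ^ 2) n * inverse (qpoch (qX ^ 2) (qX ^ 2) n)"
definition vv :: "nat \<Rightarrow> real fps" where
  "vv m = qpoch (- qX) (qX ^ 2) m * (- (qX ^ 2)) ^ m * inverse (qpoch (qX ^ 2) (qX ^ 2) m)"
definition RR :: "nat \<Rightarrow> real fps" where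
  "RR n = qpoch (- (qX ^ 2)) (qX ^ 2) n * inverse (qpoch qX (qX ^ 2) (Suc n))"
definition C1 :: "real fps" where
  "C1 = qpoch_inf (- (qX ^ 2)) (qX ^ 2) * inverse (qpoch_inf qX (qX ^ 2))"

lemma step1: "h_term n = uu n * RR n"
proof -
  have a: "qpoch (- qX) qX (2 * n) = qpoch (- qX) (qX ^ 2) n * qpoch (- (qX ^ 2)) (qX ^ 2) n"
    using qpoch_split[of "- qX" qX n] by (simp add: power2_eq_square)
  have b: "qpoch qX qX (2 * n + 1) = qpoch qX (qX ^ 2) (Suc n) * qpoch (qX ^ 2) (qX ^ 2) n"
    using qpoch_split[of qX qX n]
    by (simp add: qpoch_Suc power2_eq_square power_mult mult_ac power_mult_distrib)
  show ?thesis unfolding h_term_def uu_def RR_def a b fps_inverse_mult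
    by (simp add: mult_ac)
qed

lemma hz1_X2: "hz 1 (qX ^ 2)" by (rule hz1_Xp) simp
lemma hz1_X4: "hz 1 (qX ^ 4)" by (rule hz1_Xp) simp

lemma step2: "RR n = C1 * qG (- qX) (qX ^ 2) (- (qX ^ 2) * (qX ^ 2) ^ n)"
proof -
  define Tm where "Tm = qpoch_inf (- (qX ^ 2) * (qX ^ 2) ^ n) (qX ^ 2)"
  define Tp where "Tp = qpoch_inf (qX * (qX ^ 2) ^ Suc n) (qX ^ 2)"
  have z: "hz 1 (- (qX ^ 2) * (qX ^ 2) ^ n)" by (simp add: hz_def)
  have az: "(- qX) * (- (qX ^ 2) * (qX ^ 2) ^ n) = qX * (qX ^ 2) ^ Suc n"
    by (simp add: power2_eq_square mult_ac)
  have t1: "qpoch_inf (- (qX ^ 2)) (qX ^ 2) = qpoch (- (qX ^ 2)) (qX ^ 2) n * Tm"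
    unfolding Tm_def by (rule qinf_tail[OF hz1_X2])
  have t2: "qpoch_inf qX (qX ^ 2) = qpoch qX (qX ^ 2) (Suc n) * Tp"
    unfolding Tp_def by (rule qinf_tail[OF hz1_X2])
  have uTm: "Tm * inverse Tm = 1" unfolding Tm_def by (rule unit_qinf[OF hz1_X2]) (simp add: hz_def)
  have uTp: "Tp * inverse Tp = 1" unfolding Tp_def by (rule unit_qinf[OF hz1_X2]) (simp add: hz_def)
  have "C1 * qG (- qX) (qX ^ 2) (- (qX ^ 2) * (qX ^ 2) ^ n)
      = qpoch (- (qX ^ 2)) (qX ^ 2) n * Tm * inverse (qpoch qX (qX ^ 2) (Suc n) * Tp) * (Tp * inverse Tm)"
    unfolding C1_def qbinomial[OF hz1_X2 z] az t1 t2 Tp_def[symmetric] Tm_def[symmetric]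
    by (simp add: mult_ac)
  also have "\<dots> = RR n * (Tm * inverse Tm) * (Tp * inverse Tp)"
    unfolding RR_def fps_inverse_mult by (simp add: mult_ac)
  also have "\<dots> = RR n" by (simp add: uTm uTp)
  finally show ?thesis by simp
qed

definition ww :: "nat \<Rightarrow> nat \<Rightarrow> real fps" where
  "ww n m = uu n * vv m * ((qX ^ 2) ^ n) ^ m"

definition yy :: "nat \<Rightarrow> real fps" where
  "yy m = qbt (qX ^ 2) (qX ^ 4) (- (qX ^ 2)) m"

lemma hz_uu: "hz n (uu n)"
  unfolding uu_def mult.assoc by (rule hz_X_power_mult)

lemma hz_vv: "hz m (vv m)"
proof -
  have "hz m ((- (qX ^ 2)) ^ m)" by (rule hz_power_ge) (simp add: hz_def)
  then show ?thesis unfolding vv_def using hz_mult_left hz_mult_right by blast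
qed

lemma hz_ww: "hz (n + m) (ww n m)"
  unfolding ww_def by (rule hz_mult_right, rule hz_mult[OF hz_uu hz_vv])

lemma step3: "h_term n = C1 * ssum (\<lambda>m. ww n m)"
proof -
  have z: "hz 1 (- (qX ^ 2) * (qX ^ 2) ^ n)" by (simp add: hz_def)
  have q: "qbt (- qX) (qX ^ 2) (- (qX ^ 2) * (qX ^ 2) ^ n) m = vv m * ((qX ^ 2) ^ n) ^ m" for m
    unfolding qbt_def vv_def power_mult_distrib[of "- (qX ^ 2)" "(qX ^ 2) ^ n" m] by (simp only: mult_ac)
  have "h_term n = uu n * (C1 * ssum (qbt (- qX) (qX ^ 2) (- (qX ^ 2) * (qX ^ 2) ^ n)))"
    unfolding step1 step2 qG_def ..
  also have "\<dots> = C1 * ssum (\<lambda>m. uu n * qbt (- qX) (qX ^ 2) (- (qX ^ 2) * (qX ^ 2) ^ n) m)"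
    by (subst ssum_mult_left[OF hz_qbt[OF z]]) (simp add: mult_ac)
  also have "\<dots> = C1 * ssum (\<lambda>m. ww n m)"
    unfolding q ww_def by (simp add: mult_ac)
  finally show ?thesis .
qed

lemma hz_inner: "hz n (ssum (\<lambda>m. ww n m))"
  by (rule hz_ssum) (use hz_ww hz_mono le_add1 le_add2 in blast)+

lemma step4: "ssum h_term = C1 * ssum (\<lambda>m. ssum (\<lambda>n. ww n m))"
proof -
  have "ssum h_term = ssum (\<lambda>n. C1 * ssum (\<lambda>m. ww n m))"
    by (rule ssum_cong) (rule step3)
  also have "\<dots> = C1 * ssum (\<lambda>n. ssum (\<lambda>m. ww n m))"
    by (rule ssum_mult_left[OF hz_inner])
  also have "ssum (\<lambda>n. ssum (\<lambda>m. ww n m)) = ssum (\<lambda>m. ssum (\<lambda>n. ww n m))"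
    by (rule ssum_swap[OF hz_ww])
  finally show ?thesis .
qed

lemma step5: "ssum (\<lambda>n. ww n m) = C1 * yy m"
proof -
  define Tm where "Tm = qpoch_inf (- (qX ^ 2) * (qX ^ 2) ^ m) (qX ^ 2)"
  define Tp where "Tp = qpoch_inf (qX * (qX ^ 2) ^ m) (qX ^ 2)"
  define Pm where "Pm = qpoch (- (qX ^ 2)) (qX ^ 2) m"
  define Pp where "Pp = qpoch qX (qX ^ 2) m"
  have z: "hz 1 (qX * (qX ^ 2) ^ m)" by (simp add: hz_def)
  have az: "(- qX) * (qX * (qX ^ 2) ^ m) = - (qX ^ 2) * (qX ^ 2) ^ m"
    by (simp add: power2_eq_square mult_ac)
  have t1: "qpoch_inf (- (qX ^ 2)) (qX ^ 2) = Pm * Tm"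
    unfolding Tm_def Pm_def by (rule qinf_tail[OF hz1_X2])
  have t2: "qpoch_inf qX (qX ^ 2) = Pp * Tp"
    unfolding Tp_def Pp_def by (rule qinf_tail[OF hz1_X2])
  have uPm: "Pm * inverse Pm = 1" unfolding Pm_def by (rule unit_qpoch) (simp add: hz_def)
  have uPp: "Pp * inverse Pp = 1" unfolding Pp_def by (rule unit_qpoch) (simp add: hz_def)
  have q: "ww n m = vv m * qbt (- qX) (qX ^ 2) (qX * (qX ^ 2) ^ m) n" for n
    unfolding ww_def uu_def qbt_def
    by (simp add: power_mult_distrib mult_ac flip: power_mult)
  have "ssum (\<lambda>n. ww n m) = vv m * qG (- qX) (qX ^ 2) (qX * (qX ^ 2) ^ m)"
    unfolding q qG_def by (rule ssum_mult_left[OF hz_qbt[OF z]])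
  also have "\<dots> = vv m * (Tm * inverse Tp)"
    unfolding qbinomial[OF hz1_X2 z] az Tm_def Tp_def ..
  also have "Tm * inverse Tp = C1 * Pp * inverse Pm"
  proof -
    have "C1 * Pp * inverse Pm = Tm * inverse Tp * (Pm * inverse Pm) * (Pp * inverse Pp)"
      unfolding C1_def t1 t2 fps_inverse_mult by (simp add: mult_ac)
    then show ?thesis using uPm uPp by simp
  qed
  also have "vv m * (C1 * Pp * inverse Pm) = C1 * yy m"
  proof -
    have s1: "qpoch (- qX) (qX ^ 2) m * Pp = qpoch (qX ^ 2) (qX ^ 4) m"
      unfolding Pp_def using qpoch_sq[of qX "qX ^ 2" m] by (simp add: mult_ac flip: power_mult)
    have s2: "qpoch (qX ^ 2) (qX ^ 2) m * Pm = qpoch (qX ^ 4) (qX ^ 4) m"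
      unfolding Pm_def using qpoch_sq[of "qX ^ 2" "qX ^ 2" m] by (simp flip: power_mult)
    have "vv m * (C1 * Pp * inverse Pm)
        = C1 * ((qpoch (- qX) (qX ^ 2) m * Pp) * (- (qX ^ 2)) ^ m * inverse (qpoch (qX ^ 2) (qX ^ 2) m * Pm))"
      unfolding vv_def fps_inverse_mult by (simp add: mult_ac)
    also have "\<dots> = C1 * yy m" unfolding s1 s2 yy_def qbt_def ..
    finally show ?thesis .
  qed
  finally show ?thesis .
qed

lemma step6: "ssum h_term = C1 * C1 * qpoch_inf (- (qX ^ 4)) (qX ^ 4) * inverse (qpoch_inf (- (qX ^ 2)) (qX ^ 4))"
proof -
  have z: "hz 1 (- (qX ^ 2))" by (simp add: hz_def)
  have "ssum h_term = C1 * ssum (\<lambda>m. C1 * yy m)" unfolding step4 step5 ..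
  also have "\<dots> = C1 * (C1 * qG (qX ^ 2) (qX ^ 4) (- (qX ^ 2)))"
    unfolding yy_def qG_def by (subst ssum_mult_left[OF hz_qbt[OF z]]) rule
  also have "\<dots> = C1 * C1 * qpoch_inf (- (qX ^ 4)) (qX ^ 4) * inverse (qpoch_inf (- (qX ^ 2)) (qX ^ 4))"
    unfolding qbinomial[OF hz1_X4 z] by (simp add: mult_ac flip: power_add)
  finally show ?thesis .
qed

definition RHS :: "real fps" where
  "RHS = qpoch_inf (- fps_X) fps_X * inverse (qpoch_inf fps_X fps_X)
           * qpoch_inf (fps_X ^ 4) (fps_X ^ 4) * qpoch_inf (- (fps_X ^ 4)) (fps_X ^ 4)
           * qpoch_inf (- (fps_X ^ 4)) (fps_X ^ 4)"

lemma step7: "ssum h_term = RHS"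
proof -
  define om where "om = qpoch_inf (- qX) (qX ^ 2)"
  define op where "op = qpoch_inf qX (qX ^ 2)"
  define em where "em = qpoch_inf (- (qX ^ 2)) (qX ^ 2)"
  define ep where "ep = qpoch_inf (qX ^ 2) (qX ^ 2)"
  define fm where "fm = qpoch_inf (- (qX ^ 4)) (qX ^ 4)"
  define gm where "gm = qpoch_inf (- (qX ^ 2)) (qX ^ 4)"
  have a: "qpoch_inf (- qX) qX = om * em"
    unfolding om_def em_def using qinf_split[OF hz1_X, of "- qX"] by (simp add: power2_eq_square)
  have b: "qpoch_inf qX qX = op * ep"
    unfolding op_def ep_def using qinf_split[OF hz1_X, of qX] by (simp add: power2_eq_square)
  have fp: "qpoch_inf (qX ^ 4) (qX ^ 4) = ep * em"
    unfolding ep_def em_def using qinf_sq[OF hz1_X2, of "qX ^ 2"] by (simp flip: power_mult)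
  have e1: "em = gm * fm"
    unfolding em_def gm_def fm_def using qinf_split[OF hz1_X2, of "- (qX ^ 2)"]
    by (simp flip: power_mult power_add)
  have eu: "qpoch_inf (qX ^ 2) (qX ^ 4) * em = 1"
    unfolding em_def using qinf_euler[OF hz1_X2] by (simp flip: power_mult)
  have os: "op * om = qpoch_inf (qX ^ 2) (qX ^ 4)"
    unfolding op_def om_def using qinf_sq[OF hz1_X2, of qX] by (simp flip: power_mult)
  have r1: "om * em = inverse op"
  proof -
    have "op * (om * em) = 1" unfolding mult.assoc[symmetric] os eu ..
    then show ?thesis using fps_inverse_unique by metis
  qed
  have ugm: "gm * inverse gm = 1" unfolding gm_def by (rule unit_qinf[OF hz1_X4]) (simp add: hz_def)
  have uep: "ep * inverse ep = 1" unfolding ep_def by (rule unit_qinf[OF hz1_X2]) (simp add: hz_def)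
  have r2: "em * inverse gm = fm" using e1 ugm by (metis mult.commute mult.left_commute mult.right_neutral)
  have "RHS = (om * em) * inverse op * (ep * inverse ep) * em * fm * fm"
    unfolding RHS_def a b fp fm_def[symmetric] fps_inverse_mult by (simp add: mult_ac)
  also have "\<dots> = inverse op * inverse op * em * fm * fm" unfolding r1 uep by simp
  finally have R: "RHS = inverse op * inverse op * em * fm * fm" .
  have "ssum h_term = inverse op * inverse op * em * fm * (em * inverse gm)"
    unfolding step6 C1_def em_def[symmetric] op_def[symmetric] fm_def[symmetric] gm_def[symmetric]
    by (simp add: mult_ac)
  also have "\<dots> = RHS" unfolding r2 R ..
  finally show ?thesis .
qed


definition Sm :: "('a \<Rightarrow> nat) \<Rightarrow> 'a set \<Rightarrow> nat \<Rightarrow> 'a multiset set" where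
  "Sm w T n = {M. set_mset M \<subseteq> T \<and> (\<Sum>x\<in>#M. w x) = n}"

lemma geo_rec:
  assumes "k > 0"
  shows "inverse (1 - qX ^ k) * G = G + qX ^ k * (inverse (1 - qX ^ k) * G)"
proof -
  have u: "(1 - qX ^ k) * inverse (1 - qX ^ k) = 1"
    by (rule inverse_mult_eq_1') (use assms in simp)
  have "inverse (1 - qX ^ k) * G = ((1 - qX ^ k) * inverse (1 - qX ^ k)) * G + qX ^ k * (inverse (1 - qX ^ k) * G)"
    by (simp add: algebra_simps)
  then show ?thesis unfolding u by simp
qed

lemma Sm_empty: "Sm w {} n = (if n = 0 then {{#}} else {})"
  by (auto simp: Sm_def)

lemma Sm_small:
  assumes "t \<notin> T" "n < w t"
  shows "Sm w (insert t T) n = Sm w T n"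
proof -
  have "t \<notin># M" if "(\<Sum>x\<in>#M. w x) = n" for M
  proof
    assume "t \<in># M"
    then have "M = add_mset t (M - {#t#})" by simp
    then have "(\<Sum>x\<in>#M. w x) = w t + (\<Sum>x\<in>#M - {#t#}. w x)"
      by (metis image_mset_add_mset sum_mset.insert)
    then show False using that assms(2) by simp
  qed
  then show ?thesis unfolding Sm_def by blast
qed

lemma Sm_big:
  assumes "t \<notin> T" "w t \<le> n"
  shows "Sm w (insert t T) n = Sm w T n \<union> add_mset t ` Sm w (insert t T) (n - w t)"
proof (intro equalityI subsetI)
  fix M assume M: "M \<in> Sm w (insert t T) n"
  show "M \<in> Sm w T n \<union> add_mset t ` Sm w (insert t T) (n - w t)"
  proof (cases "t \<in># M")
    case False
    then show ?thesis using M by (auto simp: Sm_def)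
  next
    case True
    define M' where "M' = M - {#t#}"
    have MM: "M = add_mset t M'" using True by (simp add: M'_def)
    have "(\<Sum>x\<in>#M. w x) = w t + (\<Sum>x\<in>#M'. w x)" unfolding MM by simp
    then have "M' \<in> Sm w (insert t T) (n - w t)" using M unfolding Sm_def MM by auto
    then show ?thesis using MM by blast
  qed
next
  fix M assume "M \<in> Sm w T n \<union> add_mset t ` Sm w (insert t T) (n - w t)"
  then show "M \<in> Sm w (insert t T) n" using assms(2) by (auto simp: Sm_def)
qed

lemma Sm_disj:
  assumes "t \<notin> T"
  shows "Sm w T n \<inter> add_mset t ` Sm w (insert t T) m = {}"
  using assms by (auto simp: Sm_def)

lemma gf_multiset:
  assumes "finite T" "\<And>t. t \<in> T \<Longrightarrow> w t > 0"
  shows "finite (Sm w T n) \<and> (\<Prod>t\<in>T. inverse (1 - qX ^ w t)) $ n = real (card (Sm w T n))"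
  using assms
proof (induction T arbitrary: n rule: finite_induct)
  case empty
  then show ?case by (simp add: Sm_empty)
next
  case (insert t T)
  define G where "G = (\<Prod>t\<in>T. inverse (1 - qX ^ w t))"
  define F where "F = (\<Prod>t\<in>insert t T. inverse (1 - qX ^ w t))"
  have wt: "w t > 0" using insert.prems by simp
  have IH: "finite (Sm w T m) \<and> G $ m = real (card (Sm w T m))" for m
    unfolding G_def by (rule insert.IH) (use insert.prems in auto)
  have F: "F = G + qX ^ w t * F"
    unfolding F_def prod.insert[OF insert.hyps] G_def[symmetric] by (rule geo_rec[OF wt])
  show ?case unfolding F_def[symmetric]
  proof (induction n rule: less_induct)
    case (less n)
    show ?case
    proof (cases "n < w t")
      case True
      have "F $ n = G $ n" by (subst F) (simp add: fps_X_power_mult_nth True)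
      then show ?thesis using IH[of n] Sm_small[of t T n w, OF insert.hyps(2) True] by simp
    next
      case False
      then have le: "w t \<le> n" by simp
      have lt: "n - w t < n" using wt le by simp
      have "F $ n = G $ n + F $ (n - w t)" by (subst F) (simp add: fps_X_power_mult_nth False)
      moreover have fin2: "finite (Sm w (insert t T) (n - w t))" using less.IH[OF lt] by simp
      moreover have "card (add_mset t ` Sm w (insert t T) (n - w t)) = card (Sm w (insert t T) (n - w t))"
        by (rule card_image) (simp add: inj_on_def)
      ultimately show ?thesis
        using IH[of n] less.IH[OF lt] Sm_big[of t T w n, OF insert.hyps(2) le] Sm_disj[of t T w n "n - w t", OF insert.hyps(2)]
        by (simp add: card_Un_disjoint)
    qed
  qed
qed


definition Tset :: "nat \<Rightarrow> (nat \<times> nat) set" where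
  "Tset N = (SIGMA p:{1..N}. {..<colours p})"

definition Dfin :: "nat \<Rightarrow> real fps" where
  "Dfin N = (\<Prod>p\<in>{1..N}. (1 - qX ^ p) ^ colours p)"

definition Pfin :: "nat \<Rightarrow> real fps" where
  "Pfin N = (\<Prod>x\<in>Tset N. inverse (1 - qX ^ fst x))"

lemma Pfin_alt: "Pfin N = (\<Prod>p\<in>{1..N}. inverse (1 - qX ^ p) ^ colours p)"
proof -
  have "(\<Prod>p\<in>{1..N}. \<Prod>c\<in>{..<colours p}. inverse (1 - qX ^ p))
        = (\<Prod>x\<in>Tset N. inverse (1 - qX ^ fst x))"
    unfolding Tset_def using prod.Sigma[of "{1..N}" "\<lambda>p. {..<colours p}" "\<lambda>p c. inverse (1 - qX ^ p)"]
    by (simp add: case_prod_beta)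
  then show ?thesis unfolding Pfin_def by simp
qed

lemma Dfin_Pfin: "Dfin N * Pfin N = 1"
proof -
  have "Dfin N * Pfin N = (\<Prod>p\<in>{1..N}. ((1 - qX ^ p) * inverse (1 - qX ^ p)) ^ colours p)"
    unfolding Dfin_def Pfin_alt prod.distrib[symmetric] power_mult_distrib ..
  also have "\<dots> = (\<Prod>p\<in>{1..N}. 1)"
  proof (rule prod.cong)
    fix p assume "p \<in> {1..N}"
    then have "(1 - qX ^ p) * inverse (1 - qX ^ p) = (1 :: real fps)"
      by (intro inverse_mult_eq_1') simp
    then show "((1 - qX ^ p) * inverse (1 - qX ^ p)) ^ colours p = 1" by simp
  qed simp
  finally show ?thesis by simp
qed

lemma set_progr:
  fixes a b K :: nat
  assumes "1 \<le> a" "a \<le> b"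
  shows "{p\<in>{1..b*K}. p mod b = a mod b} = (\<lambda>j. a + b * j) ` {..<K}"
proof (intro equalityI subsetI)
  fix p assume p: "p \<in> {p\<in>{1..b*K}. p mod b = a mod b}"
  then have p1: "1 \<le> p" "p \<le> b * K" "p mod b = a mod b" by auto
  have bpos: "b > 0" using assms by simp
  have "a \<le> p"
  proof (cases "a = b")
    case True
    then have "p mod b = 0" using p1(3) by simp
    then have "b dvd p" by (simp add: mod_0_imp_dvd)
    then have "b \<le> p" using p1(1) by (intro dvd_imp_le) auto
    then show ?thesis using True by simp
  next
    case False then have "a < b" using assms by simp
    then have "a mod b = a" by simp
    then show ?thesis using p1(3) by (metis mod_less_eq_dividend)
  qed
  then have "b dvd p - a" using p1(3) by (simp add: mod_eq_dvd_iff_nat)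
  then obtain j where j: "p - a = b * j" by blast
  then have pj: "p = a + b * j" using \<open>a \<le> p\<close> by simp
  have "b * j < b * K" using pj p1(2) assms(1) by linarith
  then have "j < K" by (simp add: mult_less_cancel1)
  then show "p \<in> (\<lambda>j. a + b * j) ` {..<K}" using pj by blast
next
  fix p assume "p \<in> (\<lambda>j. a + b * j) ` {..<K}"
  then obtain j where j: "j < K" "p = a + b * j" by blast
  have "a + b * j \<le> b + b * j" using assms by simp
  also have "\<dots> = b * Suc j" by simp
  also have "\<dots> \<le> b * K" using j(1) by (intro mult_le_mono2) simp
  finally show "p \<in> {p\<in>{1..b*K}. p mod b = a mod b}" using j assms by auto
qed

lemma qpoch_Xpow: "qpoch (qX ^ a) (qX ^ b) n = (\<Prod>j<n. 1 - qX ^ (a + b * j))"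
  unfolding qpoch_def by (simp add: power_add power_mult)

lemma prod_progr:
  fixes a b K :: nat
  assumes "1 \<le> a" "a \<le> b"
  shows "(\<Prod>p\<in>{1..b*K}. (1 - qX ^ p) ^ (if p mod b = a mod b then 1 else 0)) = qpoch (qX ^ a) (qX ^ b) K"
proof -
  have "(\<Prod>p\<in>{1..b*K}. (1 - qX ^ p) ^ (if p mod b = a mod b then 1 else 0))
       = (\<Prod>p\<in>{1..b*K}. if p mod b = a mod b then (1 - qX ^ p) else 1)"
    by (rule prod.cong) auto
  also have "\<dots> = (\<Prod>p\<in>{p\<in>{1..b*K}. p mod b = a mod b}. (1 - qX ^ p))"
    by (rule prod.inter_filter[symmetric]) simp
  also have "\<dots> = (\<Prod>p\<in>(\<lambda>j. a + b * j) ` {..<K}. (1 - qX ^ p))"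
    unfolding set_progr[OF assms] ..
  also have "\<dots> = (\<Prod>j<K. (1 - qX ^ (a + b * j)))"
    by (subst prod.reindex) (use assms in \<open>auto simp: inj_on_def\<close>)
  also have "\<dots> = qpoch (qX ^ a) (qX ^ b) K" by (simp add: qpoch_Xpow)
  finally show ?thesis .
qed

lemma colours_exp:
  "colours p + (if p mod 8 = 8 mod 8 then 1 else 0)
   = (if p mod 1 = 1 mod 1 then 1 else 0) + (if p mod 2 = 1 mod 2 then 1 else 0) + (if p mod 8 = 4 mod 8 then 1 else 0)"
proof -
  have r: "p mod 8 < 8" by simp
  have m2: "p mod 2 = (p mod 8) mod 2" by (simp add: mod_mod_cancel)
  have r8: "p mod 8 \<in> {0,1,2,3,4,5,6,7}" using r by auto
  show ?thesis unfolding colours_def m2 using r8 by auto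
qed

lemma Dfin_eq:
  "Dfin (8 * K) = qpoch qX qX (8 * K) * qpoch qX (qX ^ 2) (4 * K) * qpoch (qX ^ 4) (qX ^ 8) K
                  * inverse (qpoch (qX ^ 8) (qX ^ 8) K)"
proof -
  define E where "E e = (\<Prod>p\<in>{1..8*K}. (1 - qX ^ p) ^ e p)" for e :: "nat \<Rightarrow> nat"
  have Eadd: "E (\<lambda>p. e1 p + e2 p) = E e1 * E e2" for e1 e2
    unfolding E_def by (simp add: power_add prod.distrib)
  have E8: "E (\<lambda>p. if p mod 8 = 8 mod 8 then 1 else 0) = qpoch (qX ^ 8) (qX ^ 8) K"
    unfolding E_def by (rule prod_progr) auto
  have E4: "E (\<lambda>p. if p mod 8 = 4 mod 8 then 1 else 0) = qpoch (qX ^ 4) (qX ^ 8) K"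
    unfolding E_def by (rule prod_progr) auto
  have E2: "E (\<lambda>p. if p mod 2 = 1 mod 2 then 1 else 0) = qpoch qX (qX ^ 2) (4 * K)"
    unfolding E_def using prod_progr[of 1 2 "4 * K"] by simp
  have E1: "E (\<lambda>p. if p mod 1 = 1 mod 1 then 1 else 0) = qpoch qX qX (8 * K)"
    unfolding E_def using prod_progr[of 1 1 "8 * K"] by simp
  have "Dfin (8 * K) * qpoch (qX ^ 8) (qX ^ 8) K
      = E (\<lambda>p. colours p + (if p mod 8 = 8 mod 8 then 1 else 0))"
    unfolding Eadd E8 by (simp add: Dfin_def E_def)
  also have "\<dots> = qpoch qX qX (8 * K) * qpoch qX (qX ^ 2) (4 * K) * qpoch (qX ^ 4) (qX ^ 8) K"
    unfolding colours_exp Eadd E1 E2 E4 ..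
  finally have e: "Dfin (8 * K) * qpoch (qX ^ 8) (qX ^ 8) K
      = qpoch qX qX (8 * K) * qpoch qX (qX ^ 2) (4 * K) * qpoch (qX ^ 4) (qX ^ 8) K" .
  have u: "qpoch (qX ^ 8) (qX ^ 8) K * inverse (qpoch (qX ^ 8) (qX ^ 8) K) = 1"
    by (rule unit_qpoch) (simp add: hz_def)
  have "Dfin (8 * K) = Dfin (8 * K) * qpoch (qX ^ 8) (qX ^ 8) K * inverse (qpoch (qX ^ 8) (qX ^ 8) K)"
    using u by (simp add: mult.assoc)
  then show ?thesis unfolding e .
qed


definition Den :: "real fps" where
  "Den = qpoch_inf qX qX * qpoch_inf qX (qX ^ 2) * qpoch_inf (qX ^ 4) (qX ^ 8)
         * inverse (qpoch_inf (qX ^ 8) (qX ^ 8))"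

lemma hz1_X8: "hz 1 (qX ^ 8)" by (rule hz1_Xp) simp

lemma Den_RHS: "Den * RHS = 1"
proof -
  define a where "a = qpoch_inf (- qX) qX"
  define op where "op = qpoch_inf qX (qX ^ 2)"
  define b where "b = qpoch_inf qX qX"
  define fp where "fp = qpoch_inf (qX ^ 4) (qX ^ 4)"
  define fm where "fm = qpoch_inf (- (qX ^ 4)) (qX ^ 4)"
  define e8 where "e8 = qpoch_inf (qX ^ 8) (qX ^ 8)"
  define h4 where "h4 = qpoch_inf (qX ^ 4) (qX ^ 8)"
  have r1: "op * a = 1" unfolding op_def a_def using qinf_euler[OF hz1_X] by simp
  have r2: "fp * fm = e8" unfolding fp_def fm_def e8_def using qinf_sq[OF hz1_X4, of "qX ^ 4"]
    by (simp flip: power_mult)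
  have r3: "h4 * fm = 1" unfolding h4_def fm_def using qinf_euler[OF hz1_X4] by (simp flip: power_mult)
  have ub: "b * inverse b = 1" unfolding b_def by (rule unit_qinf[OF hz1_X]) (simp add: hz_def)
  have ue: "e8 * inverse e8 = 1" unfolding e8_def by (rule unit_qinf[OF hz1_X8]) (simp add: hz_def)
  have "Den * RHS = (op * a) * (b * inverse b) * (fp * fm) * (h4 * fm) * inverse e8"
    unfolding Den_def RHS_def a_def[symmetric] op_def[symmetric] b_def[symmetric] fp_def[symmetric]
      fm_def[symmetric] e8_def[symmetric] h4_def[symmetric]
    by (simp add: mult_ac)
  also have "\<dots> = 1" unfolding r1 r2 r3 ub using ue by simp
  finally show ?thesis .
qed

lemma Den_cg: "cg K Den (Dfin (8 * K))"
proof -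
  have u1: "(qpoch_inf (qX ^ 8) (qX ^ 8)) $ 0 \<noteq> 0"
    by (simp add: qinf_nth0[OF hz1_X8])
  have u2: "(qpoch (qX ^ 8) (qX ^ 8) K) $ 0 \<noteq> 0"
    by (simp add: qpoch_nth0)
  have "cg K Den (qpoch qX qX (8 * K) * qpoch qX (qX ^ 2) (4 * K) * qpoch (qX ^ 4) (qX ^ 8) K
                  * inverse (qpoch (qX ^ 8) (qX ^ 8) K))"
    unfolding Den_def
    by (intro cg_mult cg_inverse qinf_cg hz1_X hz1_X2 hz1_X4 hz1_X8 u1 u2) auto
  then show ?thesis unfolding Dfin_eq .
qed

lemma RHS_cg: "cg K RHS (Pfin (8 * K))"
proof -
  have i1: "RHS = inverse Den" using Den_RHS fps_inverse_unique by metis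
  have i2: "Pfin (8 * K) = inverse (Dfin (8 * K))" using Dfin_Pfin fps_inverse_unique by metis
  have d1: "Den $ 0 \<noteq> 0" using Den_RHS by (metis fps_mult_nth_0 fps_one_nth mult_zero_left zero_neq_one)
  have d2: "Dfin (8 * K) $ 0 \<noteq> 0" using Dfin_Pfin by (metis fps_mult_nth_0 fps_one_nth mult_zero_left zero_neq_one)
  show ?thesis unfolding i1 i2 by (rule cg_inverse[OF Den_cg d1 d2])
qed

lemma hz_h_term: "hz n (h_term n)"
  unfolding h_term_def mult.assoc by (rule hz_X_power_mult)

lemma Tset_partitions:
  assumes "n \<le> N"
  shows "Sm fst (Tset N) n = coloured_partitions n"
proof (intro equalityI subsetI)
  fix M assume "M \<in> Sm fst (Tset N) n"
  then show "M \<in> coloured_partitions n"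
    unfolding Sm_def coloured_partitions_def Tset_def by auto
next
  fix M assume M: "M \<in> coloured_partitions n"
  have "fst x \<le> n" if "x \<in># M" for x
  proof -
    have "fst x \<le> (\<Sum>y\<in>#M. fst y)"
      using that by (metis insert_DiffM le_add1 image_mset_add_mset sum_mset.insert)
    then show ?thesis using M by (simp add: coloured_partitions_def)
  qed
  then show "M \<in> Sm fst (Tset N) n"
    using M assms unfolding Sm_def coloured_partitions_def Tset_def by force
qed

theorem theorem3:
  fixes n :: nat
  shows "((\<lambda>N. \<Sum>k<N. h_term k) \<longlonglongrightarrow>
           qpoch_inf (- fps_X) fps_X * inverse (qpoch_inf fps_X fps_X)
           * qpoch_inf (fps_X ^ 4) (fps_X ^ 4) * qpoch_inf (- (fps_X ^ 4)) (fps_X ^ 4)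
           * qpoch_inf (- (fps_X ^ 4)) (fps_X ^ 4))
         \<and> h n = real (card (coloured_partitions n))"
proof
  show "(\<lambda>N. \<Sum>k<N. h_term k) \<longlonglongrightarrow>
           qpoch_inf (- fps_X) fps_X * inverse (qpoch_inf fps_X fps_X)
           * qpoch_inf (fps_X ^ 4) (fps_X ^ 4) * qpoch_inf (- (fps_X ^ 4)) (fps_X ^ 4)
           * qpoch_inf (- (fps_X ^ 4)) (fps_X ^ 4)"
    using ssum_lim[OF hz_h_term] unfolding step7 RHS_def .
next
  define K where "K = Suc n"
  have hg: "h_gf = RHS" unfolding h_gf_def step7[symmetric] ssum_def ..
  have "h n = RHS $ n" unfolding h_def hg ..
  also have "\<dots> = Pfin (8 * K) $ n"
    using RHS_cg[of K] unfolding cg_def hz_def K_def by simp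
  also have "\<dots> = real (card (Sm fst (Tset (8 * K)) n))"
    unfolding Pfin_def
    by (rule conjunct2[OF gf_multiset]) (auto simp: Tset_def)
  also have "Sm fst (Tset (8 * K)) n = coloured_partitions n"
    by (rule Tset_partitions) (simp add: K_def)
  finally show "h n = real (card (coloured_partitions n))" .
qed


end
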